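(* Let $\delta$ be a regular uncountable cardinal and assume the $\delta$-partial global square principle holds. Then $\pitchfork_{\lambda,\delta}$ holds for every cardinal $\lambda>\delta$.
   Context: Work in ZFC. For a set of ordinals $C$, $\mathrm{acc}(C)=\{\alpha\in C:\alpha=\sup(C\cap\alpha)\}$. $S^{On}_\delta$ is the class of ordinals of cofinality $\delta$. The $\delta$-partial global square (for regular $\delta$) means: there are a class $S\supseteq S^{On}_\delta$ of limit ordinals and a sequence $\langle C_\alpha:\alpha\in S,\alpha>\delta\rangle$ such that each $C_\alpha$ is a club subset of $\alpha$, $\mathrm{otp}(C_\alpha)<\alpha$, $\mathrm{acc}(C_\alpha)\subseteq S$, and $C_\alpha\cap\beta=C_\beta$ whenever $\beta\in\mathrm{acc}(C_\alpha)$. Quilshon: for regular $\delta<\lambda$, $\pitchfork_{\lambda,\delta}$ holds iff there is a family $\{S_\gamma:\gamma<\delta\}$ of pairwise disjoint subsets of $\lambda$ such that for every ordinal $\eta<\lambda$ with $\mathrm{cf}(\eta)=\delta$ and every $\gamma<\delta$, $S_\gamma\cap\eta$ is stationary in $\eta$. *)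

theory Defs
  imports Main "HOL-Library.Equipollence" "HOL-Library.Countable_Set"
begin

text \<open>Ordinals are modelled as the elements of an arbitrary well-ordered type 'a
(an initial segment of the ordinals); the ordinal alpha is identified with the set
of its predecessors, lessThan alpha.\<close>

definition limit_ord :: "'a::wellorder \<Rightarrow> bool" where
  "limit_ord \<alpha> \<longleftrightarrow> (\<exists>\<beta>. \<beta> < \<alpha>) \<and> (\<forall>\<beta><\<alpha>. \<exists>\<gamma>. \<beta> < \<gamma> \<and> \<gamma> < \<alpha>)"

definition otp_eq :: "'a::wellorder set \<Rightarrow> 'a \<Rightarrow> bool" where
  "otp_eq A \<gamma> \<longleftrightarrow> (\<exists>f. bij_betw f A {..<\<gamma>} \<and> strict_mono_on A f)"

definition otp_less :: "'a::wellorder set \<Rightarrow> 'a \<Rightarrow> bool" where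
  "otp_less A \<alpha> \<longleftrightarrow> (\<exists>\<gamma><\<alpha>. otp_eq A \<gamma>)"

definition cofinal_in :: "'a::wellorder set \<Rightarrow> 'a \<Rightarrow> bool" where
  "cofinal_in A \<eta> \<longleftrightarrow> A \<subseteq> {..<\<eta>} \<and> (\<forall>\<beta><\<eta>. \<exists>a\<in>A. \<beta> \<le> a)"

definition cof_eq :: "'a::wellorder \<Rightarrow> 'a \<Rightarrow> bool" where
  "cof_eq \<eta> \<delta> \<longleftrightarrow> (\<exists>A. cofinal_in A \<eta> \<and> otp_eq A \<delta>) \<and>
                    (\<forall>\<gamma><\<delta>. \<not> (\<exists>A. cofinal_in A \<eta> \<and> otp_eq A \<gamma>))"

definition is_cardinal :: "'a::wellorder \<Rightarrow> bool" where
  "is_cardinal \<kappa> \<longleftrightarrow> (\<forall>\<beta><\<kappa>. \<not> ({..<\<beta>} \<approx> {..<\<kappa>}))"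

definition regular_uncountable_cardinal :: "'a::wellorder \<Rightarrow> bool" where
  "regular_uncountable_cardinal \<delta> \<longleftrightarrow>
     is_cardinal \<delta> \<and> uncountable {..<\<delta>} \<and> cof_eq \<delta> \<delta>"

definition acc :: "'a::wellorder set \<Rightarrow> 'a set" where
  "acc C = {\<beta>\<in>C. \<forall>\<gamma><\<beta>. \<exists>c\<in>C. \<gamma> < c \<and> c < \<beta>}"

definition club_in :: "'a::wellorder set \<Rightarrow> 'a \<Rightarrow> bool" where
  "club_in C \<alpha> \<longleftrightarrow> C \<subseteq> {..<\<alpha>} \<and> (\<forall>\<gamma><\<alpha>. \<exists>c\<in>C. \<gamma> < c) \<and>
     (\<forall>\<beta><\<alpha>. (\<exists>c\<in>C. c < \<beta>) \<and> (\<forall>\<gamma><\<beta>. \<exists>c\<in>C. \<gamma> < c \<and> c < \<beta>) \<longrightarrow> \<beta> \<in> C)"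

definition stationary_in :: "'a::wellorder set \<Rightarrow> 'a \<Rightarrow> bool" where
  "stationary_in T \<eta> \<longleftrightarrow> (\<forall>C. club_in C \<eta> \<longrightarrow> T \<inter> C \<noteq> {})"

definition partial_global_square :: "'a::wellorder \<Rightarrow> bool" where
  "partial_global_square \<delta> \<longleftrightarrow>
    (\<exists>(S::'a set) (C::'a \<Rightarrow> 'a set).
       (\<forall>\<alpha>. cof_eq \<alpha> \<delta> \<longrightarrow> \<alpha> \<in> S) \<and>
       (\<forall>\<alpha>\<in>S. limit_ord \<alpha>) \<and>
       (\<forall>\<alpha>\<in>S. \<delta> < \<alpha> \<longrightarrow>
          club_in (C \<alpha>) \<alpha> \<and> otp_less (C \<alpha>) \<alpha> \<and> acc (C \<alpha>) \<subseteq> S \<and>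
          (\<forall>\<beta>\<in>acc (C \<alpha>). \<delta> < \<beta> \<longrightarrow> C \<alpha> \<inter> {..<\<beta>} = C \<beta>)))"

definition pitchfork :: "'a::wellorder \<Rightarrow> 'a \<Rightarrow> bool" where
  "pitchfork \<mu> \<delta> \<longleftrightarrow>
    (\<exists>S::'a \<Rightarrow> 'a set.
       (\<forall>\<gamma><\<delta>. S \<gamma> \<subseteq> {..<\<mu>}) \<and>
       (\<forall>\<gamma><\<delta>. \<forall>\<gamma>'<\<delta>. \<gamma> \<noteq> \<gamma>' \<longrightarrow> S \<gamma> \<inter> S \<gamma>' = {}) \<and>
       (\<forall>\<eta><\<mu>. cof_eq \<eta> \<delta> \<longrightarrow> (\<forall>\<gamma><\<delta>. stationary_in (S \<gamma> \<inter> {..<\<eta>}) \<eta>)))"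

end

theory Submission
  imports Defs
begin

lemma sm_ge_id:
  fixes \<phi> :: "'a::wellorder \<Rightarrow> 'a"
  assumes sm: "strict_mono_on {..<\<tau>} \<phi>"
  shows "x < \<tau> \<Longrightarrow> x \<le> \<phi> x"
proof (induction x rule: less_induct)
  case (less x)
  show ?case
  proof (rule ccontr)
    assume "\<not> x \<le> \<phi> x"
    hence lt: "\<phi> x < x" by simp
    hence "\<phi> x < \<tau>" using less.prems by simp
    hence "\<phi> x \<le> \<phi> (\<phi> x)" using less.IH lt by blast
    moreover have "\<phi> (\<phi> x) < \<phi> x" using sm lt \<open>\<phi> x < \<tau>\<close> less.prems
      by (simp add: strict_mono_on_def)
    ultimately show False by simp
  qed
qed

lemma sm_le:
  fixes \<phi> :: "'a::wellorder \<Rightarrow> 'a"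
  assumes "strict_mono_on {..<\<tau>} \<phi>" "\<phi> ` {..<\<tau>} \<subseteq> {..<\<delta>}"
  shows "\<tau> \<le> \<delta>"
proof (rule ccontr)
  assume "\<not> \<tau> \<le> \<delta>"
  hence "\<delta> < \<tau>" by simp
  hence "\<delta> \<le> \<phi> \<delta>" using sm_ge_id[OF assms(1)] by blast
  moreover have "\<phi> \<delta> < \<delta>" using assms(2) \<open>\<delta> < \<tau>\<close> by auto
  ultimately show False by simp
qed

lemma inv_sm:
  fixes f :: "'a::wellorder \<Rightarrow> 'b::linorder"
  assumes "bij_betw f A B" "strict_mono_on A f"
  shows "strict_mono_on B (inv_into A f)" "bij_betw (inv_into A f) B A"
proof -
  show b: "bij_betw (inv_into A f) B A" using assms(1) by (rule bij_betw_inv_into)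
  show "strict_mono_on B (inv_into A f)"
  proof (rule strict_mono_onI)
    fix r s assume rs: "r \<in> B" "s \<in> B" "r < s"
    have ir: "inv_into A f r \<in> A" "inv_into A f s \<in> A" using b rs by (auto simp: bij_betw_def)
    have fr: "f (inv_into A f r) = r" "f (inv_into A f s) = s"
      using assms(1) rs by (auto simp: bij_betw_def f_inv_into_f)
    show "inv_into A f r < inv_into A f s"
    proof (rule ccontr)
      assume "\<not> ?thesis"
      hence "inv_into A f s \<le> inv_into A f r" by simp
      hence "f (inv_into A f s) \<le> f (inv_into A f r)"
        using assms(2) ir by (metis order.order_iff_strict strict_mono_onD)
      thus False using fr rs by simp
    qed
  qed
qed

lemma sm_mono:
  fixes f :: "'a::wellorder \<Rightarrow> 'b::linorder"
  assumes "strict_mono_on A f" "x \<in> A" "y \<in> A"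
  shows "(f x < f y) = (x < y)" "(f x \<le> f y) = (x \<le> y)"
  using assms by (metis linorder_not_le order.order_iff_strict strict_mono_onD)+

lemma otp_unique:
  fixes A :: "'a::wellorder set"
  assumes "otp_eq A \<gamma>1" "otp_eq A \<gamma>2"
  shows "\<gamma>1 = \<gamma>2"
proof -
  have le: "g1 \<le> g2" if h1: "otp_eq A g1" and h2: "otp_eq A g2" for g1 g2
  proof -
    obtain f1 where f1: "bij_betw f1 A {..<g1}" "strict_mono_on A f1" using h1 unfolding otp_eq_def by blast
    obtain f2 where f2: "bij_betw f2 A {..<g2}" "strict_mono_on A f2" using h2 unfolding otp_eq_def by blast
    have i: "strict_mono_on {..<g1} (inv_into A f1)" "bij_betw (inv_into A f1) {..<g1} A"
      using inv_sm[OF f1] by auto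
    show ?thesis
    proof (rule sm_le[of g1 "f2 \<circ> inv_into A f1"])
      have im: "inv_into A f1 ` {..<g1} = A" using i(2) by (simp add: bij_betw_def)
      show "strict_mono_on {..<g1} (f2 \<circ> inv_into A f1)"
      proof (rule strict_mono_onI)
        fix r s assume "r \<in> {..<g1}" "s \<in> {..<g1}" "r < s"
        hence "inv_into A f1 r < inv_into A f1 s" "inv_into A f1 r \<in> A" "inv_into A f1 s \<in> A"
          using i(1) im \<open>r \<in> {..<g1}\<close> \<open>s \<in> {..<g1}\<close> \<open>r < s\<close>
          by (auto simp: strict_mono_on_def)
        thus "(f2 \<circ> inv_into A f1) r < (f2 \<circ> inv_into A f1) s"
          using f2(2) by (simp add: strict_mono_onD)
      qed
      have "f2 ` A = {..<g2}" using f2(1) by (simp add: bij_betw_def)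
      thus "(f2 \<circ> inv_into A f1) ` {..<g1} \<subseteq> {..<g2}"
        using im by (subst image_comp[symmetric]) simp
    qed
  qed
  show ?thesis using le[OF assms] le[OF assms(2,1)] by simp
qed

lemma otp_exists:
  fixes A :: "'a::wellorder set"
  assumes "A \<subseteq> {..<x}"
  shows "\<exists>\<tau>\<le>x. otp_eq A \<tau>"
proof -
  define F where "F = (\<lambda>r a. LEAST z::'a. \<forall>b\<in>A. b < a \<longrightarrow> r b < z)"
  define r where "r = wfrec {(x::'a, y). x < y} F"
  have req: "r a = (LEAST z. \<forall>b\<in>A. b < a \<longrightarrow> r b < z)" for a
    unfolding r_def by (subst wfrec[OF wf]) (simp add: F_def cut_apply)
  have rle: "r a \<le> a" for a
  proof (induction a rule: less_induct)
    case (less a)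
    have "\<forall>b\<in>A. b < a \<longrightarrow> r b < a"
    proof (intro ballI impI)
      fix b assume "b \<in> A" "b < a"
      thus "r b < a" using less.IH[of b] by (meson le_less_trans)
    qed
    thus ?case unfolding req[of a] by (rule Least_le)
  qed
  have rP: "\<forall>b\<in>A. b < a \<longrightarrow> r b < r a" for a
  proof -
    have "\<forall>b\<in>A. b < a \<longrightarrow> r b < a" using rle le_less_trans by blast
    thus ?thesis unfolding req[of a] by (rule LeastI[of _ a])
  qed
  have down: "a \<in> A \<Longrightarrow> z < r a \<Longrightarrow> \<exists>b\<in>A. b < a \<and> r b = z" for a z
  proof (induction a arbitrary: z rule: less_induct)
    case (less a)
    have "\<not> (\<forall>b\<in>A. b < a \<longrightarrow> r b < z)" using less.prems(2) unfolding req[of a]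
      using not_less_Least by blast
    then obtain b where b: "b \<in> A" "b < a" "z \<le> r b" by force
    show ?case
    proof (cases "r b = z")
      case True thus ?thesis using b by blast
    next
      case False
      hence "z < r b" using b(3) by simp
      then obtain b' where "b' \<in> A" "b' < b" "r b' = z" using less.IH[OF b(2) b(1)] by blast
      moreover have "b' < a" using \<open>b' < b\<close> b(2) by (rule less_trans)
      ultimately show ?thesis by blast
    qed
  qed
  define \<tau> where "\<tau> = (LEAST z. z \<notin> r ` A)"
  have xn: "x \<notin> r ` A"
  proof
    assume "x \<in> r ` A"
    then obtain a where "a \<in> A" "x = r a" by blast
    hence "a < x" using assms by auto
    thus False using rle[of a] \<open>x = r a\<close> by simp
  qed
  have tx: "\<tau> \<le> x" unfolding \<tau>_def using xn by (rule Least_le)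
  have img: "r ` A = {..<\<tau>}"
  proof
    show "r ` A \<subseteq> {..<\<tau>}"
    proof
      fix z assume "z \<in> r ` A"
      then obtain a where a: "a \<in> A" "z = r a" by blast
      have tn: "\<tau> \<notin> r ` A" unfolding \<tau>_def using xn by (rule LeastI)
      show "z \<in> {..<\<tau>}"
      proof (rule ccontr)
        assume "z \<notin> {..<\<tau>}"
        hence "\<tau> \<le> r a" using a by simp
        moreover have "\<tau> \<noteq> r a" using tn a by blast
        ultimately have "\<tau> < r a" by simp
        then obtain b where "b \<in> A" "r b = \<tau>" using down[OF a(1)] by blast
        thus False using tn by blast
      qed
    qed
    show "{..<\<tau>} \<subseteq> r ` A"
    proof
      fix z assume "z \<in> {..<\<tau>}"
      hence "z < \<tau>" by simp
      thus "z \<in> r ` A" unfolding \<tau>_def using not_less_Least by blast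
    qed
  qed
  have sm: "strict_mono_on A r" using rP by (auto simp: strict_mono_on_def)
  have "inj_on r A"
  proof (rule inj_onI)
    fix x y assume xy: "x \<in> A" "y \<in> A" "r x = r y"
    have "x \<le> y" using sm_mono(2)[OF sm xy(1,2)] xy(3) by simp
    moreover have "y \<le> x" using sm_mono(2)[OF sm xy(2,1)] xy(3) by simp
    ultimately show "x = y" by simp
  qed
  hence "bij_betw r A {..<\<tau>}" using img by (simp add: bij_betw_def)
  thus ?thesis using tx sm otp_eq_def by blast
qed

lemma cof_min:
  assumes "cof_eq \<eta> \<delta>" "cofinal_in A \<eta>" "otp_eq A \<tau>"
  shows "\<delta> \<le> \<tau>"
  using assms unfolding cof_eq_def by (meson not_le)

lemma cof_ge:
  fixes \<eta> :: "'a::wellorder"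
  assumes "cof_eq \<eta> \<delta>"
  shows "\<delta> \<le> \<eta>"
proof (rule ccontr)
  assume "\<not> \<delta> \<le> \<eta>"
  hence lt: "\<eta> < \<delta>" by simp
  obtain A where A: "cofinal_in A \<eta>" "otp_eq A \<delta>" using assms unfolding cof_eq_def by blast
  obtain f where f: "bij_betw f A {..<\<delta>}" "strict_mono_on A f" using A(2) unfolding otp_eq_def by blast
  have h: "strict_mono_on {..<\<delta>} (inv_into A f)" "bij_betw (inv_into A f) {..<\<delta>} A"
    using inv_sm[OF f] by auto
  have "\<eta> \<le> inv_into A f \<eta>" using sm_ge_id[OF h(1) lt] .
  moreover have "inv_into A f \<eta> \<in> A" using h(2) lt by (auto simp: bij_betw_def)
  ultimately show False using A(1) unfolding cofinal_in_def by auto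
qed

lemma cof_countable_bounded:
  fixes \<eta> :: "'a::wellorder"
  assumes "cof_eq \<eta> \<delta>" "uncountable {..<\<delta>}" "countable A" "A \<subseteq> {..<\<eta>}"
  shows "\<exists>\<beta><\<eta>. \<forall>a\<in>A. a < \<beta>"
proof (rule ccontr)
  assume "\<not> ?thesis"
  hence "\<forall>\<beta><\<eta>. \<exists>a\<in>A. \<beta> \<le> a" by (meson not_le)
  hence cf: "cofinal_in A \<eta>" using assms(4) unfolding cofinal_in_def by blast
  obtain \<tau> where t: "otp_eq A \<tau>" using otp_exists[OF assms(4)] by blast
  have "\<delta> \<le> \<tau>" by (rule cof_min[OF assms(1) cf t])
  obtain f where f: "bij_betw f A {..<\<tau>}" using t unfolding otp_eq_def by blast
  have "countable {..<\<tau>}" using f assms(3) by (metis bij_betw_def countable_image)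
  moreover have "{..<\<delta>} \<subseteq> {..<\<tau>}" using \<open>\<delta> \<le> \<tau>\<close> by auto
  ultimately have "countable {..<\<delta>}" by (rule countable_subset[rotated])
  thus False using assms(2) by simp
qed

lemma cof_small_bounded:
  fixes \<delta> :: "'a::wellorder"
  assumes "is_cardinal \<delta>" "cof_eq \<delta> \<delta>" "\<nu> < \<delta>" "h ` {..<\<nu>} \<subseteq> {..<\<delta>}"
  shows "\<exists>\<beta><\<delta>. \<forall>\<xi><\<nu>. h \<xi> < \<beta>"
proof (rule ccontr)
  assume "\<not> ?thesis"
  hence "\<forall>\<beta><\<delta>. \<exists>a\<in>h ` {..<\<nu>}. \<beta> \<le> a" by (meson image_eqI lessThan_iff not_le)
  hence cf: "cofinal_in (h ` {..<\<nu>}) \<delta>" using assms(4) unfolding cofinal_in_def by blast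
  obtain \<tau> where t: "\<tau> \<le> \<delta>" "otp_eq (h ` {..<\<nu>}) \<tau>" using otp_exists[OF assms(4)] by blast
  have "\<delta> \<le> \<tau>" by (rule cof_min[OF assms(2) cf t(2)])
  hence "\<tau> = \<delta>" using t by simp
  then obtain f where f: "bij_betw f (h ` {..<\<nu>}) {..<\<delta>}" using t unfolding otp_eq_def by blast
  have "{..<\<delta>} \<lesssim> h ` {..<\<nu>}" using f by (meson eqpoll_def eqpoll_imp_lepoll eqpoll_sym)
  also have "h ` {..<\<nu>} \<lesssim> {..<\<nu>}" by (rule image_lepoll)
  finally have a: "{..<\<delta>} \<lesssim> {..<\<nu>}" .
  have b: "{..<\<nu>} \<lesssim> {..<\<delta>}" using assms(3) by (intro subset_imp_lepoll) auto
  have "{..<\<nu>} \<approx> {..<\<delta>}" using lepoll_antisym[OF b a] .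
  thus False using assms(1,3) unfolding is_cardinal_def by blast
qed

lemma omega_club:
  fixes \<eta> x :: "'a::wellorder" and D :: "nat \<Rightarrow> 'a set"
  assumes cb: "\<And>A. countable A \<Longrightarrow> A \<subseteq> {..<\<eta>} \<Longrightarrow> \<exists>\<beta><\<eta>. \<forall>a\<in>A. a < \<beta>"
    and cl: "\<And>n. club_in (D n) \<eta>" and x: "x < \<eta>"
  shows "\<exists>\<alpha> (s::nat \<Rightarrow> 'a). \<alpha> < \<eta> \<and> x < \<alpha> \<and> strict_mono s \<and> (\<forall>k. s k < \<alpha>) \<and> (\<forall>\<beta><\<alpha>. \<exists>k. \<beta> < s k)
     \<and> (\<forall>n. \<alpha> \<in> D n) \<and> (\<forall>n. \<forall>\<beta><\<alpha>. \<exists>c\<in>D n. \<beta> < c \<and> c < \<alpha>)"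
proof -
  define nxt where "nxt = (\<lambda>n y. SOME c. c \<in> D n \<and> y < c)"
  have nxt: "y < \<eta> \<Longrightarrow> nxt n y \<in> D n \<and> y < nxt n y \<and> nxt n y < \<eta>" for n y
  proof -
    assume "y < \<eta>"
    then obtain c where "c \<in> D n" "y < c" using cl[of n] unfolding club_in_def by blast
    hence "\<exists>c. c \<in> D n \<and> y < c" by blast
    hence "nxt n y \<in> D n \<and> y < nxt n y" unfolding nxt_def by (rule someI_ex)
    moreover have "D n \<subseteq> {..<\<eta>}" using cl[of n] unfolding club_in_def by blast
    ultimately show ?thesis by auto
  qed
  define idx where "idx = (\<lambda>k. fst (prod_decode k))"
  define s where "s = rec_nat (nxt 0 x) (\<lambda>k y. nxt (idx k) y)"
  have s0: "s 0 = nxt 0 x" and sS: "s (Suc k) = nxt (idx k) (s k)" for k by (simp_all add: s_def)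
  have slt: "s k < \<eta>" for k
    by (induction k) (use nxt x in \<open>simp_all add: s0 sS\<close>)
  have sinc: "s k < s (Suc k)" for k using nxt[OF slt[of k]] sS by simp
  have sD: "s (Suc k) \<in> D (idx k)" for k using nxt[OF slt[of k]] sS by simp
  have xs: "x < s 0" using nxt[OF x] s0 by simp
  have sm: "strict_mono s" using sinc by (simp add: strict_mono_Suc_iff)
  obtain \<beta>0 where b0: "\<beta>0 < \<eta>" "\<forall>a\<in>range s. a < \<beta>0" using cb[of "range s"] slt by auto
  define \<alpha> where "\<alpha> = (LEAST z. \<forall>k. s k \<le> z)"
  have aub: "\<forall>k. s k \<le> \<alpha>" unfolding \<alpha>_def by (rule LeastI[of _ \<beta>0]) (use b0 in \<open>auto intro: less_imp_le\<close>)
  have ale: "\<alpha> \<le> \<beta>0" unfolding \<alpha>_def by (rule Least_le) (use b0 in \<open>auto intro: less_imp_le\<close>)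
  have slta: "s k < \<alpha>" for k using sinc[of k] aub by (meson less_le_trans)
  have cof: "\<exists>k. \<beta> < s k" if "\<beta> < \<alpha>" for \<beta>
  proof -
    have "\<not> (\<forall>k. s k \<le> \<beta>)" using not_less_Least[OF that[unfolded \<alpha>_def]] by blast
    thus ?thesis by (auto simp: not_le)
  qed
  have lim: "\<exists>c\<in>D n. \<beta> < c \<and> c < \<alpha>" if ba: "\<beta> < \<alpha>" for n \<beta>
  proof -
    obtain k where k: "\<beta> < s k" using cof[OF ba] by blast
    define j where "j = prod_encode (n, k)"
    have jk: "k \<le> j" unfolding j_def by (rule le_prod_encode_2)
    have ij: "idx j = n" unfolding idx_def j_def by simp
    have "s k \<le> s j" using sm jk by (simp add: strict_mono_less_eq)
    hence "\<beta> < s (Suc j)" using k sinc[of j] by (meson less_le_trans less_trans)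
    thus ?thesis using sD[of j] ij slta[of "Suc j"] by blast
  qed
  have alt: "\<alpha> < \<eta>" using ale b0 by simp
  have aD: "\<alpha> \<in> D n" for n
  proof -
    have "\<exists>c\<in>D n. c < \<alpha>" using lim[of "s 0" n] slta[of 0] by blast
    moreover have "(\<exists>c\<in>D n. c < \<alpha>) \<and> (\<forall>\<gamma><\<alpha>. \<exists>c\<in>D n. \<gamma> < c \<and> c < \<alpha>) \<longrightarrow> \<alpha> \<in> D n"
      using cl[of n] alt unfolding club_in_def by blast
    ultimately show ?thesis using lim[of _ n] by blast
  qed
  have xa: "x < \<alpha>" using xs slta[of 0] by (rule less_trans)
  have "\<alpha> < \<eta> \<and> x < \<alpha> \<and> strict_mono s \<and> (\<forall>k. s k < \<alpha>) \<and> (\<forall>\<beta><\<alpha>. \<exists>k. \<beta> < s k)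
     \<and> (\<forall>n. \<alpha> \<in> D n) \<and> (\<forall>n. \<forall>\<beta><\<alpha>. \<exists>c\<in>D n. \<beta> < c \<and> c < \<alpha>)"
    using alt xa sm slta cof aD lim by simp
  thus ?thesis by auto
qed

lemma stationary_mono: "stationary_in X \<eta> \<Longrightarrow> X \<subseteq> Y \<Longrightarrow> stationary_in Y \<eta>"
  unfolding stationary_in_def by blast

lemma club_full:
  fixes \<eta> :: "'a::wellorder"
  assumes "\<forall>x<\<eta>. \<exists>y<\<eta>. x < y"
  shows "club_in {..<\<eta>} \<eta>"
  using assms unfolding club_in_def by auto

lemma stationary_nonempty:
  fixes \<eta> :: "'a::wellorder"
  assumes "\<forall>x<\<eta>. \<exists>y<\<eta>. x < y" "stationary_in X \<eta>"
  shows "\<exists>x\<in>X. x < \<eta>"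
  using assms(2) club_full[OF assms(1)] unfolding stationary_in_def by blast

lemma ruc_lim:
  fixes \<delta> :: "'a::wellorder"
  assumes "regular_uncountable_cardinal \<delta>"
  shows "\<forall>x<\<delta>. \<exists>y<\<delta>. x < y"
proof (intro allI impI)
  fix x assume "x < \<delta>"
  thus "\<exists>y<\<delta>. x < y"
    using cof_countable_bounded[of \<delta> \<delta> "{x}"] assms unfolding regular_uncountable_cardinal_def by auto
qed

lemma ruc_cb:
  fixes \<delta> :: "'a::wellorder"
  assumes "regular_uncountable_cardinal \<delta>" "countable A" "A \<subseteq> {..<\<delta>}"
  shows "\<exists>\<beta><\<delta>. \<forall>a\<in>A. a < \<beta>"
  using cof_countable_bounded[of \<delta> \<delta> A] assms unfolding regular_uncountable_cardinal_def by auto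

lemma fodor:
  fixes \<delta> :: "'a::wellorder"
  assumes rc: "regular_uncountable_cardinal \<delta>"
    and X: "stationary_in X \<delta>" "X \<subseteq> {..<\<delta>}" and reg: "\<forall>\<alpha>\<in>X. f \<alpha> < \<alpha>"
  shows "\<exists>\<nu><\<delta>. stationary_in {\<alpha>\<in>X. f \<alpha> = \<nu>} \<delta>"
proof (rule ccontr)
  assume "\<not> ?thesis"
  hence ex: "\<exists>E. club_in E \<delta> \<and> {\<alpha>\<in>X. f \<alpha> = \<nu>} \<inter> E = {}" if "\<nu> < \<delta>" for \<nu>
    using that unfolding stationary_in_def by blast
  define E where "E = (\<lambda>\<nu>. SOME E. club_in E \<delta> \<and> {\<alpha>\<in>X. f \<alpha> = \<nu>} \<inter> E = {})"
  have E: "club_in (E \<nu>) \<delta> \<and> {\<alpha>\<in>X. f \<alpha> = \<nu>} \<inter> E \<nu> = {}" if "\<nu> < \<delta>" for \<nu>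
    unfolding E_def by (rule someI_ex[OF ex[OF that]])
  have card: "is_cardinal \<delta>" and cof: "cof_eq \<delta> \<delta>" using rc unfolding regular_uncountable_cardinal_def by auto
  have lim: "\<forall>x<\<delta>. \<exists>y<\<delta>. x < y" by (rule ruc_lim[OF rc])
  define \<Delta> where "\<Delta> = {\<alpha>. \<alpha> < \<delta> \<and> (\<forall>\<nu><\<alpha>. \<alpha> \<in> E \<nu>)}"
  have Ecl: "\<beta> \<in> E \<nu>" if "\<nu> < \<delta>" "\<beta> < \<delta>" "\<exists>c\<in>E \<nu>. c < \<beta>" "\<forall>\<gamma><\<beta>. \<exists>c\<in>E \<nu>. \<gamma> < c \<and> c < \<beta>" for \<nu> \<beta>
    using E[OF that(1)] that(2-4) unfolding club_in_def by blast
  have Eub: "\<exists>c\<in>E \<nu>. y < c" if "\<nu> < \<delta>" "y < \<delta>" for \<nu> y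
    using E[OF that(1)] that(2) unfolding club_in_def by blast
  have Esub: "E \<nu> \<subseteq> {..<\<delta>}" if "\<nu> < \<delta>" for \<nu>
    using E[OF that(1)] unfolding club_in_def by blast
  have step: "\<exists>z<\<delta>. y < z \<and> (\<forall>\<nu><y. \<exists>e\<in>E \<nu>. y < e \<and> e \<le> z)" if y: "y < \<delta>" for y
  proof -
    define h where "h = (\<lambda>\<nu>. LEAST e. e \<in> E \<nu> \<and> y < e)"
    have h: "h \<nu> \<in> E \<nu> \<and> y < h \<nu> \<and> h \<nu> < \<delta>" if "\<nu> < y" for \<nu>
    proof -
      have nd: "\<nu> < \<delta>" using that y by (rule less_trans)
      obtain c where "c \<in> E \<nu>" "y < c" using Eub[OF nd y] by blast
      hence "h \<nu> \<in> E \<nu> \<and> y < h \<nu>" unfolding h_def by (rule LeastI[where P="\<lambda>e. e \<in> E \<nu> \<and> y < e", OF conjI])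
      thus ?thesis using Esub[OF nd] by auto
    qed
    have "h ` {..<y} \<subseteq> {..<\<delta>}" using h by auto
    then obtain \<beta> where b: "\<beta> < \<delta>" "\<forall>\<xi><y. h \<xi> < \<beta>" using cof_small_bounded[OF card cof y] by blast
    obtain y' where y': "y' < \<delta>" "y < y'" using lim y by blast
    show ?thesis
    proof (intro exI[of _ "max \<beta> y'"] conjI allI impI)
      show "max \<beta> y' < \<delta>" using b y' by simp
      show "y < max \<beta> y'" using y' by (simp add: less_max_iff_disj)
      fix \<nu> assume "\<nu> < y"
      thus "\<exists>e\<in>E \<nu>. y < e \<and> e \<le> max \<beta> y'" using h[of \<nu>] b by (intro bexI[of _ "h \<nu>"]) (auto simp: le_max_iff_disj less_imp_le)
    qed
  qed
  have unb: "\<exists>\<alpha>\<in>\<Delta>. x < \<alpha>" if x: "x < \<delta>" for x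
  proof -
    define Q where "Q = (\<lambda>y z. y < z \<and> (\<forall>\<nu><y. \<exists>e\<in>E \<nu>. y < e \<and> e \<le> z))"
    define xs where "xs = rec_nat x (\<lambda>n y. LEAST z. Q y z)"
    have xs0: "xs 0 = x" and xsS: "xs (Suc n) = (LEAST z. Q (xs n) z)" for n by (simp_all add: xs_def)
    have inv: "xs n < \<delta> \<and> Q (xs n) (xs (Suc n))" for n
    proof (induction n)
      case 0
      obtain z where z: "z < \<delta>" "Q x z" using step[OF x] unfolding Q_def by blast
      have "Q x (LEAST z. Q x z)" using z(2) by (rule LeastI)
      thus ?case using x by (simp add: xs0 xsS)
    next
      case (Suc n)
      have "xs (Suc n) < \<delta>"
      proof -
        obtain z where z: "z < \<delta>" "Q (xs n) z" using step Suc unfolding Q_def by blast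
        have "xs (Suc n) \<le> z" unfolding xsS using z(2) by (rule Least_le)
        thus ?thesis using z(1) by simp
      qed
      moreover obtain z where z: "z < \<delta>" "Q (xs (Suc n)) z" using step[OF calculation] unfolding Q_def by blast
      moreover have "Q (xs (Suc n)) (LEAST z. Q (xs (Suc n)) z)" using z(2) by (rule LeastI)
      ultimately show ?case by (simp add: xsS[of "Suc n"])
    qed
    have inc: "xs n < xs (Suc n)" for n using inv[of n] unfolding Q_def by simp
    have sm: "strict_mono xs" using inc by (simp add: strict_mono_Suc_iff)
    have xsd: "xs n < \<delta>" for n using inv by simp
    obtain \<beta>0 where b0: "\<beta>0 < \<delta>" "\<forall>a\<in>range xs. a < \<beta>0" using ruc_cb[OF rc, of "range xs"] xsd by auto
    define \<alpha> where "\<alpha> = (LEAST z. \<forall>k. xs k \<le> z)"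
    have aub: "\<forall>k. xs k \<le> \<alpha>" unfolding \<alpha>_def by (rule LeastI[of _ \<beta>0]) (use b0 in \<open>auto intro: less_imp_le\<close>)
    have ale: "\<alpha> \<le> \<beta>0" unfolding \<alpha>_def by (rule Least_le) (use b0 in \<open>auto intro: less_imp_le\<close>)
    have alt: "\<alpha> < \<delta>" using ale b0 by simp
    have slta: "xs k < \<alpha>" for k using inc[of k] aub by (meson less_le_trans)
    have cofa: "\<exists>k. \<beta> < xs k" if ba: "\<beta> < \<alpha>" for \<beta>
    proof -
      have "\<not> (\<forall>k. xs k \<le> \<beta>)" using not_less_Least[OF ba[unfolded \<alpha>_def]] by blast
      thus ?thesis by (auto simp: not_le)
    qed
    have aE: "\<alpha> \<in> E \<nu>" if nu: "\<nu> < \<alpha>" for \<nu>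
    proof -
      have nd: "\<nu> < \<delta>" using nu alt by (rule less_trans)
      obtain m where m: "\<nu> < xs m" using cofa[OF nu] by blast
      have lim2: "\<exists>c\<in>E \<nu>. \<gamma> < c \<and> c < \<alpha>" if ga: "\<gamma> < \<alpha>" for \<gamma>
      proof -
        obtain n where n: "\<gamma> < xs n" using cofa[OF ga] by blast
        define k where "k = max n m"
        have "xs n \<le> xs k" "xs m \<le> xs k" using sm unfolding k_def by (simp_all add: strict_mono_less_eq)
        hence gk: "\<gamma> < xs k" and nk: "\<nu> < xs k" using n m by (meson less_le_trans)+
        obtain e where e: "e \<in> E \<nu>" "xs k < e" "e \<le> xs (Suc k)" using inv[of k] nk unfolding Q_def by blast
        have "e < \<alpha>" using e(3) slta[of "Suc k"] by (rule le_less_trans)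
        thus ?thesis using e gk by (meson less_trans)
      qed
      show ?thesis
      proof (rule Ecl[OF nd alt])
        show "\<exists>c\<in>E \<nu>. c < \<alpha>" using lim2[OF nu] by blast
        show "\<forall>\<gamma><\<alpha>. \<exists>c\<in>E \<nu>. \<gamma> < c \<and> c < \<alpha>" using lim2 by blast
      qed
    qed
    have "\<alpha> \<in> \<Delta>" unfolding \<Delta>_def using alt aE by blast
    moreover have "x < \<alpha>" using slta[of 0] by (simp add: xs0)
    ultimately show ?thesis by blast
  qed
  have cl: "club_in \<Delta> \<delta>"
    unfolding club_in_def
  proof (intro conjI allI impI)
    show "\<Delta> \<subseteq> {..<\<delta>}" unfolding \<Delta>_def by auto
    fix \<gamma> assume "\<gamma> < \<delta>" thus "\<exists>c\<in>\<Delta>. \<gamma> < c" using unb by blast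
  next
    fix \<beta> assume bd: "\<beta> < \<delta>" and h: "(\<exists>c\<in>\<Delta>. c < \<beta>) \<and> (\<forall>\<gamma><\<beta>. \<exists>c\<in>\<Delta>. \<gamma> < c \<and> c < \<beta>)"
    have "\<beta> \<in> E \<nu>" if nb: "\<nu> < \<beta>" for \<nu>
    proof (rule Ecl)
      show nd: "\<nu> < \<delta>" using nb bd by (rule less_trans)
      show "\<beta> < \<delta>" by (rule bd)
      have "\<exists>c\<in>E \<nu>. \<gamma> < c \<and> c < \<beta>" if gb: "\<gamma> < \<beta>" for \<gamma>
      proof -
        obtain c where c: "c \<in> \<Delta>" "max \<gamma> \<nu> < c" "c < \<beta>" using h gb nb by (meson max_less_iff_conj)
        hence "c \<in> E \<nu>" unfolding \<Delta>_def by auto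
        thus ?thesis using c by auto
      qed
      thus "\<exists>c\<in>E \<nu>. c < \<beta>" "\<forall>\<gamma><\<beta>. \<exists>c\<in>E \<nu>. \<gamma> < c \<and> c < \<beta>" using nb by blast+
    qed
    thus "\<beta> \<in> \<Delta>" unfolding \<Delta>_def using bd by blast
  qed
  then obtain \<alpha> where a: "\<alpha> \<in> X" "\<alpha> \<in> \<Delta>" using X(1) unfolding stationary_in_def by blast
  have "f \<alpha> < \<alpha>" using reg a(1) by blast
  hence "\<alpha> \<in> E (f \<alpha>)" and fd: "f \<alpha> < \<delta>" using a(2) unfolding \<Delta>_def by auto
  thus False using E[OF fd] a(1) by blast
qed

lemma solovay:
  fixes \<delta> :: "'a::wellorder"
  assumes rc: "regular_uncountable_cardinal \<delta>"
  shows "\<exists>P::'a \<Rightarrow> 'a. \<forall>\<gamma><\<delta>. stationary_in {\<xi>. \<xi> < \<delta> \<and> P \<xi> = \<gamma>} \<delta>"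
proof -
  have cof: "cof_eq \<delta> \<delta>" using rc unfolding regular_uncountable_cardinal_def by auto
  have lim: "\<forall>x<\<delta>. \<exists>y<\<delta>. x < y" by (rule ruc_lim[OF rc])
  define good where "good = (\<lambda>\<alpha> (s::nat \<Rightarrow> 'a). strict_mono s \<and> (\<forall>k. s k < \<alpha>) \<and> (\<forall>\<beta><\<alpha>. \<exists>k. \<beta> < s k))"
  define T where "T = {\<alpha>. \<alpha> < \<delta> \<and> (\<exists>s. good \<alpha> s)}"
  define a where "a = (\<lambda>\<alpha>. SOME s. good \<alpha> s)"
  have a: "good \<alpha> (a \<alpha>)" if "\<alpha> \<in> T" for \<alpha>
  proof -
    have "Ex (good \<alpha>)" using that unfolding T_def by blast
    thus ?thesis unfolding a_def by (rule someI_ex)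
  qed
  have Tsub: "T \<subseteq> {..<\<delta>}" unfolding T_def by auto
  have cb: "\<And>A. countable A \<Longrightarrow> A \<subseteq> {..<\<delta>} \<Longrightarrow> \<exists>\<beta><\<delta>. \<forall>a\<in>A. a < \<beta>" by (rule ruc_cb[OF rc])
  have "\<exists>n. \<forall>\<zeta><\<delta>. stationary_in {\<alpha>\<in>T. \<zeta> \<le> a \<alpha> n} \<delta>"
  proof (rule ccontr)
    assume "\<not> ?thesis"
    have "\<forall>n. \<exists>p. fst p < \<delta> \<and> club_in (snd p) \<delta> \<and> {\<alpha>\<in>T. fst p \<le> a \<alpha> n} \<inter> snd p = {}"
    proof
      fix n
      obtain \<zeta> where z: "\<zeta> < \<delta>" "\<not> stationary_in {\<alpha>\<in>T. \<zeta> \<le> a \<alpha> n} \<delta>"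
        using \<open>\<not> (\<exists>n. \<forall>\<zeta><\<delta>. stationary_in {\<alpha>\<in>T. \<zeta> \<le> a \<alpha> n} \<delta>)\<close> by blast
      then obtain D where "club_in D \<delta>" "{\<alpha>\<in>T. \<zeta> \<le> a \<alpha> n} \<inter> D = {}"
        unfolding stationary_in_def by blast
      thus "\<exists>p. fst p < \<delta> \<and> club_in (snd p) \<delta> \<and> {\<alpha>\<in>T. fst p \<le> a \<alpha> n} \<inter> snd p = {}"
        using z(1) by (intro exI[of _ "(\<zeta>, D)"]) simp
    qed
    from choice[OF this] obtain F where F: "\<forall>n. fst (F n) < \<delta> \<and> club_in (snd (F n)) \<delta> \<and> {\<alpha>\<in>T. fst (F n) \<le> a \<alpha> n} \<inter> snd (F n) = {}"
      by blast
    define \<zeta> where "\<zeta> = (\<lambda>n. fst (F n))"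
    define D where "D = (\<lambda>n. snd (F n))"
    have zD: "\<zeta> n < \<delta> \<and> club_in (D n) \<delta> \<and> {\<alpha>\<in>T. \<zeta> n \<le> a \<alpha> n} \<inter> D n = {}" for n
      using F unfolding \<zeta>_def D_def by blast
    obtain \<beta> where b: "\<beta> < \<delta>" "\<forall>z\<in>range \<zeta>. z < \<beta>" using cb[of "range \<zeta>"] zD by auto
    have clD: "\<And>n. club_in (D n) \<delta>" using zD by blast
    have oc: "\<exists>\<alpha> (s::nat \<Rightarrow> 'a). \<alpha> < \<delta> \<and> \<beta> < \<alpha> \<and> strict_mono s \<and> (\<forall>k. s k < \<alpha>) \<and> (\<forall>\<beta><\<alpha>. \<exists>k. \<beta> < s k)
     \<and> (\<forall>n. \<alpha> \<in> D n) \<and> (\<forall>n. \<forall>\<beta>'<\<alpha>. \<exists>c\<in>D n. \<beta>' < c \<and> c < \<alpha>)"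
    proof (rule omega_club)
      show "\<And>A. countable A \<Longrightarrow> A \<subseteq> {..<\<delta>} \<Longrightarrow> \<exists>\<beta><\<delta>. \<forall>a\<in>A. a < \<beta>" by (rule cb)
      show "\<And>n. club_in (D n) \<delta>" by (rule clD)
      show "\<beta> < \<delta>" by (rule b(1))
    qed
    then obtain \<alpha> and s :: "nat \<Rightarrow> 'a" where as0: "\<alpha> < \<delta> \<and> \<beta> < \<alpha> \<and> strict_mono s \<and> (\<forall>k. s k < \<alpha>) \<and> (\<forall>\<beta><\<alpha>. \<exists>k. \<beta> < s k)
     \<and> (\<forall>n. \<alpha> \<in> D n) \<and> (\<forall>n. \<forall>\<beta>'<\<alpha>. \<exists>c\<in>D n. \<beta>' < c \<and> c < \<alpha>)"
      by blast
    hence as: "\<alpha> < \<delta>" "\<beta> < \<alpha>" "strict_mono s" "\<forall>k. s k < \<alpha>" "\<forall>\<beta><\<alpha>. \<exists>k. \<beta> < s k"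
      "\<forall>n. \<alpha> \<in> D n" by auto
    have aT: "\<alpha> \<in> T" unfolding T_def good_def using as by blast
    have "a \<alpha> n < \<beta>" for n
    proof -
      have "\<not> \<zeta> n \<le> a \<alpha> n" using zD[of n] aT as(6) by blast
      moreover have "\<zeta> n < \<beta>" using b(2) by simp
      ultimately show ?thesis by simp
    qed
    moreover obtain k where "\<beta> < a \<alpha> k" using a[OF aT] as(2) unfolding good_def by blast
    ultimately show False by (meson less_asym)
  qed
  then obtain n where n: "\<And>\<zeta>. \<zeta> < \<delta> \<Longrightarrow> stationary_in {\<alpha>\<in>T. \<zeta> \<le> a \<alpha> n} \<delta>" by blast
  define f where "f = (\<lambda>\<alpha>. a \<alpha> n)"
  have freg: "f \<alpha> < \<alpha>" if "\<alpha> \<in> T" for \<alpha> using a[OF that] unfolding f_def good_def by blast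
  define N where "N = {\<nu>. \<nu> < \<delta> \<and> stationary_in {\<alpha>\<in>T. f \<alpha> = \<nu>} \<delta>}"
  have Ncof: "cofinal_in N \<delta>"
    unfolding cofinal_in_def
  proof (intro conjI allI impI)
    show "N \<subseteq> {..<\<delta>}" unfolding N_def by auto
    fix \<zeta> assume z: "\<zeta> < \<delta>"
    have X: "stationary_in {\<alpha>\<in>T. \<zeta> \<le> f \<alpha>} \<delta>" using n[OF z] unfolding f_def .
    obtain \<nu> where nu: "\<nu> < \<delta>" "stationary_in {\<alpha>\<in>{\<alpha>\<in>T. \<zeta> \<le> f \<alpha>}. f \<alpha> = \<nu>} \<delta>"
      using fodor[OF rc X, of f] Tsub freg by auto
    obtain \<alpha> where "\<alpha> \<in> {\<alpha>\<in>{\<alpha>\<in>T. \<zeta> \<le> f \<alpha>}. f \<alpha> = \<nu>}" using stationary_nonempty[OF lim nu(2)] by blast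
    hence "\<zeta> \<le> \<nu>" by auto
    moreover have "\<nu> \<in> N" unfolding N_def using nu by (auto elim: stationary_mono)
    ultimately show "\<exists>a\<in>N. \<zeta> \<le> a" by blast
  qed
  have Nsub: "N \<subseteq> {..<\<delta>}" unfolding N_def by auto
  obtain \<tau> where t: "\<tau> \<le> \<delta>" "otp_eq N \<tau>" using otp_exists[OF Nsub] by blast
  have "\<delta> \<le> \<tau>" by (rule cof_min[OF cof Ncof t(2)])
  hence "\<tau> = \<delta>" using t(1) by simp
  then obtain e where e: "bij_betw e N {..<\<delta>}" using t(2) unfolding otp_eq_def by blast
  define P where "P = (\<lambda>\<xi>. if \<xi> \<in> T \<and> f \<xi> \<in> N then e (f \<xi>) else \<delta>)"
  show ?thesis
  proof (intro exI[of _ P] allI impI)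
    fix \<gamma> assume g: "\<gamma> < \<delta>"
    hence "\<gamma> \<in> e ` N" using e unfolding bij_betw_def by simp
    then obtain \<nu> where nu: "\<nu> \<in> N" "e \<nu> = \<gamma>" by blast
    have "stationary_in {\<alpha>\<in>T. f \<alpha> = \<nu>} \<delta>" using nu(1) unfolding N_def by blast
    moreover have "{\<alpha>\<in>T. f \<alpha> = \<nu>} \<subseteq> {\<xi>. \<xi> < \<delta> \<and> P \<xi> = \<gamma>}"
      using nu Tsub unfolding P_def by auto
    ultimately show "stationary_in {\<xi>. \<xi> < \<delta> \<and> P \<xi> = \<gamma>} \<delta>" by (rule stationary_mono)
  qed
qed

lemma restr_iso:
  fixes f :: "'a::wellorder \<Rightarrow> 'a"
  assumes f: "bij_betw f C {..<\<epsilon>}" "strict_mono_on C f" and c: "c \<in> C"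
  shows "otp_eq (C \<inter> {..<c}) (f c)"
  unfolding otp_eq_def
proof (intro exI conjI)
  have img: "f ` C = {..<\<epsilon>}" using f(1) by (simp add: bij_betw_def)
  have inj: "inj_on f C" using f(1) by (simp add: bij_betw_def)
  show "strict_mono_on (C \<inter> {..<c}) f" using f(2) by (auto simp: strict_mono_on_def)
  have "f ` (C \<inter> {..<c}) = {..<f c}"
  proof
    show "f ` (C \<inter> {..<c}) \<subseteq> {..<f c}" using f(2) c by (auto simp: strict_mono_on_def)
    show "{..<f c} \<subseteq> f ` (C \<inter> {..<c})"
    proof
      fix z assume z: "z \<in> {..<f c}"
      have "f c < \<epsilon>" using img c by auto
      hence "z \<in> f ` C" using z img by auto
      then obtain c' where c': "c' \<in> C" "z = f c'" by blast
      have "c' < c" using sm_mono(1)[OF f(2) c' (1) c] z c' by simp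
      thus "z \<in> f ` (C \<inter> {..<c})" using c' by blast
    qed
  qed
  moreover have "inj_on f (C \<inter> {..<c})" using inj by (rule inj_on_subset) auto
  ultimately show "bij_betw f (C \<inter> {..<c}) {..<f c}" by (simp add: bij_betw_def)
qed

lemma club_cofinal: "club_in C \<eta> \<Longrightarrow> cofinal_in C (\<eta>::'a::wellorder)"
  unfolding club_in_def cofinal_in_def by (meson less_imp_le)

lemma image_club:
  fixes \<eta> :: "'a::wellorder"
  assumes cb: "\<And>A. countable A \<Longrightarrow> A \<subseteq> {..<\<eta>} \<Longrightarrow> \<exists>\<beta><\<eta>. \<forall>a\<in>A. a < \<beta>"
    and C: "club_in C \<eta>" and f: "bij_betw f C {..<\<epsilon>}" "strict_mono_on C f"
    and D: "club_in D \<eta>" and b0: "b0 < \<eta>"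
  shows "club_in (f ` {\<beta>\<in>C. \<beta> \<in> D \<and> b0 < \<beta> \<and> \<beta> \<in> acc C}) \<epsilon>"
proof -
  define K where "K = {\<beta>\<in>C. \<beta> \<in> D \<and> b0 < \<beta> \<and> \<beta> \<in> acc C}"
  have img: "f ` C = {..<\<epsilon>}" using f(1) by (simp add: bij_betw_def)
  have KC: "K \<subseteq> C" unfolding K_def by auto
  have KD: "\<beta> \<in> D" and Kb: "b0 < \<beta>" if "\<beta> \<in> K" for \<beta> using that unfolding K_def by auto
  have Csub: "C \<subseteq> {..<\<eta>}" using C unfolding club_in_def by blast
  have Cub: "\<exists>c\<in>C. y < c" if "y < \<eta>" for y using C that unfolding club_in_def by blast
  have Ccl: "\<beta> \<in> C" if "\<beta> < \<eta>" "\<exists>c\<in>C. c < \<beta>" "\<forall>\<gamma><\<beta>. \<exists>c\<in>C. \<gamma> < c \<and> c < \<beta>" for \<beta>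
    using C that unfolding club_in_def by blast
  have Dcl: "\<beta> \<in> D" if "\<beta> < \<eta>" "\<exists>c\<in>D. c < \<beta>" "\<forall>\<gamma><\<beta>. \<exists>c\<in>D. \<gamma> < c \<and> c < \<beta>" for \<beta>
    using D that unfolding club_in_def by blast
  have fl: "(f x < f y) = (x < y)" "(f x \<le> f y) = (x \<le> y)" if "x \<in> C" "y \<in> C" for x y
    using sm_mono[OF f(2) that] by auto
  show ?thesis
    unfolding K_def[symmetric] club_in_def
  proof (intro conjI allI impI)
    show "f ` K \<subseteq> {..<\<epsilon>}" using KC img by blast
  next
    fix \<gamma> assume g: "\<gamma> < \<epsilon>"
    then obtain c where c: "c \<in> C" "\<gamma> = f c" using img by (metis imageE lessThan_iff)
    have cl: "c < \<eta>" using c Csub by auto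
    define x where "x = max c b0"
    have x: "x < \<eta>" using cl b0 unfolding x_def by simp
    define DD where "DD = (\<lambda>n::nat. if n = 0 then D else C)"
    have clDD: "\<And>n. club_in (DD n) \<eta>" unfolding DD_def using C D by simp
    have oc: "\<exists>\<alpha> (s::nat \<Rightarrow> 'a). \<alpha> < \<eta> \<and> x < \<alpha> \<and> strict_mono s \<and> (\<forall>k. s k < \<alpha>) \<and> (\<forall>\<beta><\<alpha>. \<exists>k. \<beta> < s k)
     \<and> (\<forall>n. \<alpha> \<in> DD n) \<and> (\<forall>n. \<forall>\<beta>'<\<alpha>. \<exists>c\<in>DD n. \<beta>' < c \<and> c < \<alpha>)"
    proof (rule omega_club)
      show "\<And>A. countable A \<Longrightarrow> A \<subseteq> {..<\<eta>} \<Longrightarrow> \<exists>\<beta><\<eta>. \<forall>a\<in>A. a < \<beta>" by (rule cb)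
      show "\<And>n. club_in (DD n) \<eta>" by (rule clDD)
      show "x < \<eta>" by (rule x)
    qed
    then obtain \<alpha> where a: "x < \<alpha>" "\<alpha> \<in> DD 0" "\<alpha> \<in> DD 1" "\<forall>\<beta>'<\<alpha>. \<exists>c\<in>DD 1. \<beta>' < c \<and> c < \<alpha>"
      by blast
    have aC: "\<alpha> \<in> C" and aD: "\<alpha> \<in> D" and alim: "\<forall>\<beta>'<\<alpha>. \<exists>c\<in>C. \<beta>' < c \<and> c < \<alpha>"
      using a unfolding DD_def by auto
    have "\<alpha> \<in> acc C" unfolding acc_def using aC alim by blast
    moreover have "c < \<alpha>" "b0 < \<alpha>" using a(1) unfolding x_def by (simp_all add: max_less_iff_conj)
    ultimately have "\<alpha> \<in> K" unfolding K_def using aC aD by blast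
    moreover have "\<gamma> < f \<alpha>" using c \<open>c < \<alpha>\<close> fl(1)[OF c(1) aC] by simp
    ultimately show "\<exists>e\<in>f ` K. \<gamma> < e" by blast
  next
    fix \<xi> assume xe: "\<xi> < \<epsilon>" and h: "(\<exists>e\<in>f ` K. e < \<xi>) \<and> (\<forall>\<gamma><\<xi>. \<exists>e\<in>f ` K. \<gamma> < e \<and> e < \<xi>)"
    obtain c where c: "c \<in> C" "\<xi> = f c" using xe img by (metis imageE lessThan_iff)
    have cl: "c < \<eta>" using c Csub by auto
    obtain \<beta>0 where b0K: "\<beta>0 \<in> K" "f \<beta>0 < \<xi>" using h by blast
    have b0c: "\<beta>0 < c" using b0K KC c fl(1)[OF _ c(1), of \<beta>0] by auto
    have up: "\<exists>\<beta>\<in>K. c' < \<beta> \<and> \<beta> < c" if "c' \<in> C" "c' < c" for c'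
    proof -
      have "f c' < \<xi>" using that c fl(1)[OF that(1) c(1)] by simp
      then obtain e where "e \<in> f ` K" "f c' < e" "e < \<xi>" using h by blast
      then obtain \<beta> where "\<beta> \<in> K" "f c' < f \<beta>" "f \<beta> < \<xi>" by blast
      moreover have "\<beta> \<in> C" using \<open>\<beta> \<in> K\<close> KC by auto
      ultimately show ?thesis using that c fl(1)[OF that(1) \<open>\<beta> \<in> C\<close>] fl(1)[OF \<open>\<beta> \<in> C\<close> c(1)] by auto
    qed
    have kc: "\<exists>\<beta>\<in>K. y < \<beta> \<and> \<beta> < c" if yc: "y < c" for y
    proof (cases "\<exists>c'\<in>C. y < c' \<and> c' < c")
      case True
      then obtain c' where "c' \<in> C" "y < c'" "c' < c" by blast
      thus ?thesis using up[of c'] by (meson less_trans)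
    next
      case False
      hence ub: "\<forall>c'\<in>C. c' < c \<longrightarrow> c' \<le> y" by (meson not_le)
      define s where "s = (LEAST z. \<forall>c'\<in>C. c' < c \<longrightarrow> c' \<le> z)"
      have sy: "s \<le> y" unfolding s_def using ub by (rule Least_le)
      have sub: "\<forall>c'\<in>C. c' < c \<longrightarrow> c' \<le> s" unfolding s_def using ub by (rule LeastI)
      have sc: "s < c" using sy yc by (rule le_less_trans)
      have se: "s < \<eta>" using sc cl by (rule less_trans)
      have "s \<in> C"
      proof (rule ccontr)
        assume sn: "s \<notin> C"
        have "\<beta>0 \<in> C" using b0K KC by auto
        hence "\<beta>0 \<le> s" using sub b0c by blast
        hence "\<beta>0 < s" using sn \<open>\<beta>0 \<in> C\<close> by (metis order.order_iff_strict)
        moreover have "\<forall>t<s. \<exists>c'\<in>C. t < c' \<and> c' < s"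
        proof (intro allI impI)
          fix t assume ts: "t < s"
          have "\<not> (\<forall>c'\<in>C. c' < c \<longrightarrow> c' \<le> t)" using not_less_Least[OF ts[unfolded s_def]] by blast
          then obtain c' where "c' \<in> C" "c' < c" "t < c'" by (meson not_le)
          moreover hence "c' \<le> s" using sub by blast
          moreover have "c' \<noteq> s" using sn \<open>c' \<in> C\<close> by blast
          ultimately show "\<exists>c'\<in>C. t < c' \<and> c' < s" by (meson order.order_iff_strict)
        qed
        ultimately have "s \<in> C" using Ccl[OF se] \<open>\<beta>0 \<in> C\<close> by blast
        thus False using sn by blast
      qed
      then obtain \<beta> where "\<beta> \<in> K" "s < \<beta>" "\<beta> < c" using up[of s] sc by blast
      moreover have "\<beta> \<in> C" using \<open>\<beta> \<in> K\<close> KC by auto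
      ultimately have "\<beta> \<le> s" using sub by blast
      thus ?thesis using \<open>s < \<beta>\<close> by simp
    qed
    have "\<forall>y<c. \<exists>c'\<in>C. y < c' \<and> c' < c"
    proof (intro allI impI)
      fix y assume "y < c"
      then obtain \<beta> where "\<beta> \<in> K" "y < \<beta>" "\<beta> < c" using kc by blast
      thus "\<exists>c'\<in>C. y < c' \<and> c' < c" using KC by blast
    qed
    hence "c \<in> acc C" unfolding acc_def using c(1) by blast
    moreover have "c \<in> D"
    proof (rule Dcl[OF cl])
      show "\<exists>c'\<in>D. c' < c" using KD[OF b0K(1)] b0c by blast
      show "\<forall>\<gamma><c. \<exists>c'\<in>D. \<gamma> < c' \<and> c' < c"
      proof (intro allI impI)
        fix \<gamma> assume "\<gamma> < c"
        then obtain \<beta> where "\<beta> \<in> K" "\<gamma> < \<beta>" "\<beta> < c" using kc by blast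
        thus "\<exists>c'\<in>D. \<gamma> < c' \<and> c' < c" using KD by blast
      qed
    qed
    moreover have "b0 < c" using Kb[OF b0K(1)] b0c by (rule less_trans)
    ultimately have "c \<in> K" unfolding K_def using c(1) by blast
    thus "\<xi> \<in> f ` K" using c by blast
  qed
qed

lemma cof_transfer:
  fixes \<eta> :: "'a::wellorder"
  assumes cof: "cof_eq \<eta> \<delta>" and C: "club_in C \<eta>"
    and f: "bij_betw f C {..<\<epsilon>}" "strict_mono_on C f"
  shows "cof_eq \<epsilon> \<delta>"
proof -
  have img: "f ` C = {..<\<epsilon>}" using f(1) by (simp add: bij_betw_def)
  have Csub: "C \<subseteq> {..<\<eta>}" using C unfolding club_in_def by blast
  have Cub: "\<exists>c\<in>C. y < c" if "y < \<eta>" for y using C that unfolding club_in_def by blast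
  have fl: "(f x < f y) = (x < y)" "(f x \<le> f y) = (x \<le> y)" if "x \<in> C" "y \<in> C" for x y
    using sm_mono[OF f(2) that] by auto
  define fi where "fi = inv_into C f"
  have fi: "strict_mono_on {..<\<epsilon>} fi" "bij_betw fi {..<\<epsilon>} C" unfolding fi_def using inv_sm[OF f] by auto
  have ffi: "f (fi z) = z" if "z < \<epsilon>" for z
    unfolding fi_def using that img by (metis f_inv_into_f lessThan_iff)
  have fiC: "fi z \<in> C" if "z < \<epsilon>" for z using fi(2) that by (auto simp: bij_betw_def)
  have fif: "fi (f c) = c" if "c \<in> C" for c
    unfolding fi_def using that f(1) by (simp add: bij_betw_def inv_into_f_f)
  have minimal: "\<not> (\<exists>A. cofinal_in A \<epsilon> \<and> otp_eq A \<gamma>)" if g: "\<gamma> < \<delta>" for \<gamma>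
  proof
    assume "\<exists>A. cofinal_in A \<epsilon> \<and> otp_eq A \<gamma>"
    then obtain A h where A: "cofinal_in A \<epsilon>" "bij_betw h A {..<\<gamma>}" "strict_mono_on A h"
      unfolding otp_eq_def by blast
    have Asub: "A \<subseteq> {..<\<epsilon>}" using A(1) unfolding cofinal_in_def by blast
    define A' where "A' = fi ` A"
    have A'C: "A' \<subseteq> C" unfolding A'_def using Asub fiC by auto
    have fA': "f ` A' = A" unfolding A'_def using Asub ffi by (force simp: image_comp)
    have injA': "inj_on f A'" using f(1) A'C unfolding bij_betw_def by (meson inj_on_subset)
    have bA': "bij_betw f A' A" using injA' fA' by (simp add: bij_betw_def)
    have "cofinal_in A' \<eta>"
      unfolding cofinal_in_def
    proof (intro conjI allI impI)
      show "A' \<subseteq> {..<\<eta>}" using A'C Csub by blast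
      fix \<beta> assume "\<beta> < \<eta>"
      then obtain c where c: "c \<in> C" "\<beta> < c" using Cub by blast
      have "f c < \<epsilon>" using c img by auto
      then obtain a where a: "a \<in> A" "f c \<le> a" using A(1) unfolding cofinal_in_def by blast
      have "a < \<epsilon>" using a Asub by auto
      hence "c \<le> fi a" using fl(2)[OF c(1) fiC] a ffi by simp
      thus "\<exists>a\<in>A'. \<beta> \<le> a" using a c unfolding A'_def by (meson imageI less_imp_le order.trans)
    qed
    moreover have "otp_eq A' \<gamma>"
      unfolding otp_eq_def
    proof (intro exI conjI)
      show "bij_betw (h \<circ> f) A' {..<\<gamma>}" using bA' A(2) by (rule bij_betw_trans)
      show "strict_mono_on A' (h \<circ> f)"
      proof (rule strict_mono_onI)
        fix r s assume rs: "r \<in> A'" "s \<in> A'" "r < s"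
        have "f r < f s" using fl(1)[of r s] rs A'C by auto
        moreover have "f r \<in> A" "f s \<in> A" using rs fA' by auto
        ultimately show "(h \<circ> f) r < (h \<circ> f) s" using A(3) by (simp add: strict_mono_onD)
      qed
    qed
    ultimately have "\<delta> \<le> \<gamma>" by (rule cof_min[OF cof])
    thus False using g by simp
  qed
  obtain B hB where B: "cofinal_in B \<eta>" "bij_betw hB B {..<\<delta>}" "strict_mono_on B hB"
    using cof unfolding cof_eq_def otp_eq_def by blast
  have Bsub: "B \<subseteq> {..<\<eta>}" using B(1) unfolding cofinal_in_def by blast
  define m where "m = (\<lambda>b. LEAST c. c \<in> C \<and> b \<le> c)"
  have m: "m b \<in> C \<and> b \<le> m b" if bB: "b \<in> B" for b
  proof -
    obtain c where "c \<in> C" "b < c" using Cub bB Bsub by blast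
    hence "c \<in> C \<and> b \<le> c" by simp
    thus ?thesis unfolding m_def by (rule LeastI)
  qed
  have mmono: "m b \<le> m b'" if "b \<in> B" "b' \<in> B" "b \<le> b'" for b b'
  proof -
    have "m b' \<in> C \<and> b \<le> m b'" using m[OF that(2)] that(3) by (meson order.trans)
    thus ?thesis unfolding m_def by (rule Least_le)
  qed
  define k where "k = (\<lambda>b. f (m b))"
  have kmono: "k b \<le> k b'" if "b \<in> B" "b' \<in> B" "b \<le> b'" for b b'
    unfolding k_def using mmono[OF that] fl(2) m that(1,2) by blast
  define A' where "A' = k ` B"
  have A'sub: "A' \<subseteq> {..<\<epsilon>}" unfolding A'_def k_def using m img by blast
  have A'cof: "cofinal_in A' \<epsilon>"
    unfolding cofinal_in_def
  proof (intro conjI allI impI)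
    show "A' \<subseteq> {..<\<epsilon>}" by (rule A'sub)
    fix z assume "z < \<epsilon>"
    then obtain c where c: "c \<in> C" "z = f c" using img by (metis imageE lessThan_iff)
    have "c < \<eta>" using c Csub by auto
    then obtain b where b: "b \<in> B" "c \<le> b" using B(1) unfolding cofinal_in_def by blast
    have "c \<le> m b" using m[OF b(1)] b(2) by (meson order.trans)
    hence "z \<le> k b" unfolding k_def using c fl(2) m[OF b(1)] by blast
    thus "\<exists>a\<in>A'. z \<le> a" unfolding A'_def using b by blast
  qed
  obtain \<tau> where t: "otp_eq A' \<tau>" using otp_exists[OF A'sub] by blast
  have dt: "\<delta> \<le> \<tau>" using minimal A'cof t by (meson not_le)
  obtain hA where hA: "bij_betw hA A' {..<\<tau>}" "strict_mono_on A' hA" using t unfolding otp_eq_def by blast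
  define ia where "ia = inv_into A' hA"
  have ia: "strict_mono_on {..<\<tau>} ia" "bij_betw ia {..<\<tau>} A'" unfolding ia_def using inv_sm[OF hA] by auto
  define lb where "lb = (\<lambda>a. LEAST b. b \<in> B \<and> k b = a)"
  have lb: "lb a \<in> B \<and> k (lb a) = a" if aA: "a \<in> A'" for a
  proof -
    obtain b where "b \<in> B" "k b = a" using aA unfolding A'_def by blast
    hence "b \<in> B \<and> k b = a" by simp
    thus ?thesis unfolding lb_def by (rule LeastI)
  qed
  have lbm: "lb a < lb a'" if "a \<in> A'" "a' \<in> A'" "a < a'" for a a'
  proof (rule ccontr)
    assume "\<not> lb a < lb a'"
    hence "lb a' \<le> lb a" by simp
    hence "k (lb a') \<le> k (lb a)" using kmono lb that(1,2) by blast
    thus False using lb[OF that(1)] lb[OF that(2)] that(3) by simp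
  qed
  have "\<tau> \<le> \<delta>"
  proof (rule sm_le[of \<tau> "\<lambda>\<xi>. hB (lb (ia \<xi>))"])
    have iaA: "ia \<xi> \<in> A'" if "\<xi> < \<tau>" for \<xi> using ia(2) that by (auto simp: bij_betw_def)
    show "strict_mono_on {..<\<tau>} (\<lambda>\<xi>. hB (lb (ia \<xi>)))"
    proof (rule strict_mono_onI)
      fix r s assume rs: "r \<in> {..<\<tau>}" "s \<in> {..<\<tau>}" "r < s"
      have "ia r < ia s" using ia(1) rs by (simp add: strict_mono_onD)
      hence "lb (ia r) < lb (ia s)" using lbm iaA rs by simp
      thus "hB (lb (ia r)) < hB (lb (ia s))" using B(3) lb iaA rs by (simp add: strict_mono_onD)
    qed
    show "(\<lambda>\<xi>. hB (lb (ia \<xi>))) ` {..<\<tau>} \<subseteq> {..<\<delta>}"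
      using B(2) lb iaA unfolding bij_betw_def by blast
  qed
  hence "\<tau> = \<delta>" using dt by simp
  thus ?thesis unfolding cof_eq_def using A'cof t minimal by blast
qed

lemma main_square:
  fixes \<delta> :: "'a::wellorder" and S :: "'a set" and C :: "'a \<Rightarrow> 'a set" and P :: "'a \<Rightarrow> 'a"
  assumes rc: "regular_uncountable_cardinal \<delta>"
    and Ssq: "\<forall>\<alpha>. cof_eq \<alpha> \<delta> \<longrightarrow> \<alpha> \<in> S"
    and Sq: "\<forall>\<alpha>\<in>S. \<delta> < \<alpha> \<longrightarrow>
          club_in (C \<alpha>) \<alpha> \<and> otp_less (C \<alpha>) \<alpha> \<and> acc (C \<alpha>) \<subseteq> S \<and>
          (\<forall>\<beta>\<in>acc (C \<alpha>). \<delta> < \<beta> \<longrightarrow> C \<alpha> \<inter> {..<\<beta>} = C \<beta>)"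
    and P: "\<forall>\<gamma><\<delta>. stationary_in {\<xi>. \<xi> < \<delta> \<and> P \<xi> = \<gamma>} \<delta>"
  shows "\<exists>g::'a \<Rightarrow> 'a. \<forall>\<eta>. cof_eq \<eta> \<delta> \<longrightarrow> (\<forall>\<gamma><\<delta>. stationary_in {\<beta>. \<beta> < \<eta> \<and> g \<beta> = \<gamma>} \<eta>)"
proof -
  have unc: "uncountable {..<\<delta>}" using rc unfolding regular_uncountable_cardinal_def by auto
  define ot where "ot = (\<lambda>\<beta>. SOME \<gamma>. otp_eq (C \<beta>) \<gamma>)"
  have oeq: "otp_eq (C \<beta>) (ot \<beta>) \<and> ot \<beta> < \<beta>" if bS: "\<beta> \<in> S" "\<delta> < \<beta>" for \<beta>
  proof -
    obtain \<gamma> where g: "\<gamma> < \<beta>" "otp_eq (C \<beta>) \<gamma>" using Sq bS unfolding otp_less_def by blast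
    have "otp_eq (C \<beta>) (ot \<beta>)" unfolding ot_def using g(2) by (rule someI)
    moreover hence "ot \<beta> = \<gamma>" using g(2) by (rule otp_unique)
    ultimately show ?thesis using g(1) by simp
  qed
  define G where "G = (\<lambda>g \<beta>. if \<beta> < \<delta> then P \<beta> else if \<beta> \<in> S \<and> \<delta> < \<beta> \<and> ot \<beta> < \<beta> then g (ot \<beta>) else \<delta>)"
  define g where "g = wfrec {(x::'a, y). x < y} G"
  have geq: "g \<beta> = (if \<beta> < \<delta> then P \<beta> else if \<beta> \<in> S \<and> \<delta> < \<beta> \<and> ot \<beta> < \<beta> then g (ot \<beta>) else \<delta>)" for \<beta>
    unfolding g_def by (subst wfrec[OF wf]) (simp add: G_def cut_apply)
  have gP: "g \<beta> = P \<beta>" if "\<beta> < \<delta>" for \<beta> using geq[of \<beta>] that by simp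
  have gS: "g \<beta> = g (ot \<beta>)" if bS: "\<beta> \<in> S" "\<delta> < \<beta>" for \<beta>
  proof -
    have "\<not> \<beta> < \<delta>" using bS(2) by (simp add: less_imp_not_less)
    thus ?thesis using geq[of \<beta>] bS oeq[OF bS] by simp
  qed
  have baseset: "{\<xi>. \<xi> < \<delta> \<and> g \<xi> = \<gamma>} = {\<xi>. \<xi> < \<delta> \<and> P \<xi> = \<gamma>}" for \<gamma> using gP by auto
  have claim: "cof_eq \<eta> \<delta> \<longrightarrow> (\<forall>\<gamma><\<delta>. stationary_in {\<beta>. \<beta> < \<eta> \<and> g \<beta> = \<gamma>} \<eta>)" for \<eta>
  proof (induction \<eta> rule: less_induct)
    case (less \<eta>)
    show ?case
    proof (intro impI allI)
      fix \<gamma> assume cof: "cof_eq \<eta> \<delta>" and gd: "\<gamma> < \<delta>"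
      have "\<delta> \<le> \<eta>" using cof by (rule cof_ge)
      show "stationary_in {\<beta>. \<beta> < \<eta> \<and> g \<beta> = \<gamma>} \<eta>"
      proof (cases "\<eta> = \<delta>")
        case True thus ?thesis using P gd baseset by simp
      next
        case False
        hence de: "\<delta> < \<eta>" using \<open>\<delta> \<le> \<eta>\<close> by simp
        have eS: "\<eta> \<in> S" using Ssq cof by blast
        have sq: "club_in (C \<eta>) \<eta>" "otp_less (C \<eta>) \<eta>" "acc (C \<eta>) \<subseteq> S"
          "\<forall>\<beta>\<in>acc (C \<eta>). \<delta> < \<beta> \<longrightarrow> C \<eta> \<inter> {..<\<beta>} = C \<beta>" using Sq eS de by auto
        obtain \<epsilon> where eps: "\<epsilon> < \<eta>" "otp_eq (C \<eta>) \<epsilon>" using sq(2) unfolding otp_less_def by blast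
        obtain f where f: "bij_betw f (C \<eta>) {..<\<epsilon>}" "strict_mono_on (C \<eta>) f" using eps(2) unfolding otp_eq_def by blast
        have "\<delta> \<le> \<epsilon>" using cof_min[OF cof club_cofinal[OF sq(1)] eps(2)] .
        have Qe: "stationary_in {\<xi>. \<xi> < \<epsilon> \<and> g \<xi> = \<gamma>} \<epsilon>"
        proof (cases "\<epsilon> = \<delta>")
          case True thus ?thesis using P gd baseset by simp
        next
          case False
          have "cof_eq \<epsilon> \<delta>" by (rule cof_transfer[OF cof sq(1) f])
          thus ?thesis using less.IH[OF eps(1)] gd by blast
        qed
        have cb: "\<And>A. countable A \<Longrightarrow> A \<subseteq> {..<\<eta>} \<Longrightarrow> \<exists>\<beta><\<eta>. \<forall>a\<in>A. a < \<beta>"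
          using cof_countable_bounded[OF cof unc] by blast
        obtain b0 where b0: "b0 \<in> C \<eta>" "\<delta> < b0" using sq(1) de unfolding club_in_def by blast
        have b0e: "b0 < \<eta>" using b0 sq(1) unfolding club_in_def by blast
        show ?thesis
          unfolding stationary_in_def
        proof (intro allI impI)
          fix D assume D: "club_in D \<eta>"
          have E: "club_in (f ` {\<beta>\<in>C \<eta>. \<beta> \<in> D \<and> b0 < \<beta> \<and> \<beta> \<in> acc (C \<eta>)}) \<epsilon>"
            by (rule image_club[OF cb sq(1) f D b0e])
          then obtain \<xi> where xi: "\<xi> \<in> {\<xi>. \<xi> < \<epsilon> \<and> g \<xi> = \<gamma>}" "\<xi> \<in> f ` {\<beta>\<in>C \<eta>. \<beta> \<in> D \<and> b0 < \<beta> \<and> \<beta> \<in> acc (C \<eta>)}"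
            using Qe unfolding stationary_in_def by blast
          then obtain \<beta> where b: "\<beta> \<in> C \<eta>" "\<beta> \<in> D" "b0 < \<beta>" "\<beta> \<in> acc (C \<eta>)" "\<xi> = f \<beta>" by blast
          have db: "\<delta> < \<beta>" using b0(2) b(3) by (rule less_trans)
          have bS: "\<beta> \<in> S" using sq(3) b(4) by blast
          have Cb: "C \<eta> \<inter> {..<\<beta>} = C \<beta>" using sq(4) b(4) db by blast
          have "otp_eq (C \<beta>) (f \<beta>)" using restr_iso[OF f b(1)] Cb by simp
          hence ob: "ot \<beta> = f \<beta>" using oeq[OF bS db] otp_unique by blast
          have "g \<beta> = \<gamma>" using gS[OF bS db] ob xi(1) b(5) by simp
          moreover have "\<beta> < \<eta>" using b(1) sq(1) unfolding club_in_def by blast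
          ultimately show "{\<beta>. \<beta> < \<eta> \<and> g \<beta> = \<gamma>} \<inter> D \<noteq> {}" using b(2) by blast
        qed
      qed
    qed
  qed
  show ?thesis using claim by blast
qed

theorem claim3p3:
  fixes \<delta> :: "'a::wellorder"
  assumes "regular_uncountable_cardinal \<delta>"
    and "partial_global_square \<delta>"
  shows "\<forall>\<mu>. is_cardinal \<mu> \<and> \<delta> < \<mu> \<longrightarrow> pitchfork \<mu> \<delta>"
proof (intro allI impI)
  fix \<mu> :: 'a
  obtain S C where SC: "\<forall>\<alpha>. cof_eq \<alpha> \<delta> \<longrightarrow> \<alpha> \<in> S"
       "\<forall>\<alpha>\<in>S. \<delta> < \<alpha> \<longrightarrow>
          club_in (C \<alpha>) \<alpha> \<and> otp_less (C \<alpha>) \<alpha> \<and> acc (C \<alpha>) \<subseteq> S \<and>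
          (\<forall>\<beta>\<in>acc (C \<alpha>). \<delta> < \<beta> \<longrightarrow> C \<alpha> \<inter> {..<\<beta>} = C \<beta>)"
    using assms(2) unfolding partial_global_square_def by blast
  obtain P :: "'a \<Rightarrow> 'a" where P: "\<forall>\<gamma><\<delta>. stationary_in {\<xi>. \<xi> < \<delta> \<and> P \<xi> = \<gamma>} \<delta>"
    using solovay[OF assms(1)] by blast
  obtain g :: "'a \<Rightarrow> 'a" where g: "\<forall>\<eta>. cof_eq \<eta> \<delta> \<longrightarrow> (\<forall>\<gamma><\<delta>. stationary_in {\<beta>. \<beta> < \<eta> \<and> g \<beta> = \<gamma>} \<eta>)"
    using main_square[OF assms(1) SC P] by blast
  show "pitchfork \<mu> \<delta>"
    unfolding pitchfork_def
  proof (intro exI[of _ "\<lambda>\<gamma>. {\<beta>. \<beta> < \<mu> \<and> g \<beta> = \<gamma>}"] conjI allI impI)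
    fix \<eta> \<gamma> assume "\<eta> < \<mu>" "cof_eq \<eta> \<delta>" "\<gamma> < \<delta>"
    moreover have "{\<beta>. \<beta> < \<mu> \<and> g \<beta> = \<gamma>} \<inter> {..<\<eta>} = {\<beta>. \<beta> < \<eta> \<and> g \<beta> = \<gamma>}"
      using \<open>\<eta> < \<mu>\<close> by auto
    ultimately show "stationary_in ({\<beta>. \<beta> < \<mu> \<and> g \<beta> = \<gamma>} \<inter> {..<\<eta>}) \<eta>" using g by simp
  qed auto
qed

end
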